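(* Let $0<q<1$. Then \[ \frac{(1+q)q^{3}}{(1-q)^{5}(1-q^{3})^{3}}-\sum_{n=1}^{\infty}\frac{(1+q^{2n+1})\,q^{7n}}{(1-q^{2n-1})^{3}(1-q^{2n+1})^{2}(1-q^{2n+3})^{3}} =\frac{\pi_{q}^{2}(1+q+q^{2})(1+q+q^{2}+q^{3}+q^{4})\,q^{5/2}}{(1+q^{2})^{3}(1-q^{2})^{8}}. \]
   Context: Let $0<q<1$. With $(z;q)_\infty=\prod_{k\ge0}(1-zq^k)$, Gosper's $q$-pi is $\pi_q=(1-q^2)q^{1/4}\frac{(q^2;q^2)_\infty^2}{(q;q^2)_\infty^2}$. *)

theory Defs
  imports "HOL-Analysis.Analysis"
begin

definition qpoch_inf :: "real \<Rightarrow> real \<Rightarrow> real" where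
  "qpoch_inf z q = (\<Prod>k. (1 - z * q ^ k))"

definition gosper_pi_q :: "real \<Rightarrow> real" where
  "gosper_pi_q q = (1 - q^2) * q powr (1/4) *
     (qpoch_inf (q^2) (q^2))^2 / (qpoch_inf q (q^2))^2"

end

theory Submission imports Defs begin

definition Ep :: "real \<Rightarrow> nat \<Rightarrow> real" where "Ep q n = (\<Prod>j<n. 1 - q^(2*j+2))"
definition Op :: "real \<Rightarrow> nat \<Rightarrow> real" where "Op q n = (\<Prod>j<n. 1 - q^(2*j+1))"

lemma Ep_0 [simp]: "Ep q 0 = 1" by (simp add: Ep_def)
lemma Op_0 [simp]: "Op q 0 = 1" by (simp add: Op_def)
lemma Ep_Suc: "Ep q (Suc n) = Ep q n * (1 - q^(2*n+2))" by (simp add: Ep_def)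
lemma Op_Suc: "Op q (Suc n) = Op q n * (1 - q^(2*n+1))" by (simp add: Op_def)

lemma pow_lt1: "0 < q \<Longrightarrow> q < 1 \<Longrightarrow> 0 < n \<Longrightarrow> q^n < (1::real)"
  by (simp add: power_less_one_iff)

lemma Ep_pos: "0 < q \<Longrightarrow> q < 1 \<Longrightarrow> 0 < Ep q n"
  unfolding Ep_def by (intro prod_pos) (metis diff_gt_0_iff_gt pow_lt1 zero_less_Suc add_2_eq_Suc')
lemma Op_pos: "0 < q \<Longrightarrow> q < 1 \<Longrightarrow> 0 < Op q n"
  unfolding Op_def by (intro prod_pos) (metis diff_gt_0_iff_gt pow_lt1 zero_less_Suc Suc_eq_plus1)
lemma Ep_le1: "0 < q \<Longrightarrow> q < 1 \<Longrightarrow> Ep q n \<le> 1"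
  unfolding Ep_def by (intro prod_le_1) (auto simp: less_imp_le power_le_one simp del: power_Suc power_add)
lemma Op_le1: "0 < q \<Longrightarrow> q < 1 \<Longrightarrow> Op q n \<le> 1"
  unfolding Op_def by (intro prod_le_1) (auto simp: less_imp_le power_le_one simp del: power_Suc power_add)

definition hh :: "real \<Rightarrow> nat \<Rightarrow> real" where
  "hh q k = q^k*(1+q^(2*k+1))/(1-q^(2*k+1))^2"
definition WW :: "real \<Rightarrow> nat \<Rightarrow> nat \<Rightarrow> real" where
  "WW q N k = Op q (N+k+1)*Op q (N-k)*Op q (N+1)^2/(Ep q (N+k+1)*Ep q (N-k)*Ep q N^2)"
definition GG :: "real \<Rightarrow> nat \<Rightarrow> nat \<Rightarrow> real" where
  "GG q N k = - (q^(2*N+2)/q^k) * (1-q^(4*N+5))*(1-q^(2*k)) * Op q (N+k+1)*Op q (N+1-k)*Op q (N+1)^2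
      / ((1-q^(2*N+2))^3*(1-q^(2*N+3))*Ep q (N+k+1)*Ep q (N+1-k)*Ep q N^2)"

lemma alg1:
  fixes q z w :: real
  assumes "1 - q*z^2 \<noteq> 0" "1 - q^4*w*z^4 \<noteq> 0" "1 - q^2*w \<noteq> 0" "1 - q^2*w*z^2 \<noteq> 0" "1 - q^3*w*z^2 \<noteq> 0"
  shows "z*(1+q*z^2)/(1-q*z^2)^2 * ((1-q^3*w*z^4)*(1-q*w)*(1-q^3*w*z^2)^2/((1-q^4*w*z^4)*(1-q^2*w)*(1-q^2*w*z^2)^2))
   = z*(1+q*z^2)/(1-q*z^2)^2
     + (- (q*w*z)*(1-q^5*w^2*z^4)*(1-q^2*z^2)*(1-q^3*w*z^4)/((1-q^2*w*z^2)^3*(1-q^3*w*z^2)*(1-q^4*w*z^4)))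
     - (- (q^2*w*z)*(1-q^5*w^2*z^4)*(1-z^2)*(1-q*w)/((1-q^2*w*z^2)^3*(1-q^3*w*z^2)*(1-q^2*w)))"
proof -
  obtain D1 D2 D3 D4 D5 where d: "D1 = 1 - q*z^2" "D2 = 1 - q^4*w*z^4" "D3 = 1 - q^2*w" "D4 = 1 - q^2*w*z^2" "D5 = 1 - q^3*w*z^2" by blast
  have nz: "D1 \<noteq> 0" "D2 \<noteq> 0" "D3 \<noteq> 0" "D4 \<noteq> 0" "D5 \<noteq> 0" using assms d by auto
  have "z*(1+q*z^2)/D1^2 * ((1-q^3*w*z^4)*(1-q*w)*D5^2/(D2*D3*D4^2))
   = z*(1+q*z^2)/D1^2
     + (- (q*w*z)*(1-q^5*w^2*z^4)*(1-q^2*z^2)*(1-q^3*w*z^4)/(D4^3*D5*D2))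
     - (- (q^2*w*z)*(1-q^5*w^2*z^4)*(1-z^2)*(1-q*w)/(D4^3*D5*D3))"
    using nz apply (simp add: field_simps)
    unfolding d by algebra
  then show ?thesis using d by simp
qed

lemma rearr1:
  fixes hz a1 a2 a3 d1 d2 d3 o1 o2 o3 e1 e2 e3 c1 c0 :: real
  assumes "d1\<noteq>0" "d2\<noteq>0" "d3\<noteq>0" "e1\<noteq>0" "e2\<noteq>0" "e3\<noteq>0"
   and "hz*(a1*a2*a3^2/(d1*d2*d3^2)) = hz + c1*a1/d1 - c0*a2/d2"
  shows "hz*((o1*a1)*(o2*a2)*(o3*a3)^2/((e1*d1)*(e2*d2)*(e3*d3)^2))
     = hz*(o1* o2* o3^2/(e1* e2* e3^2)) + c1*(o1*a1)* o2* o3^2/((e1*d1)* e2* e3^2) - c0* o1*(o2*a2)* o3^2/(e1*(e2*d2)* e3^2)"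
proof -
  have "hz*((o1*a1)*(o2*a2)*(o3*a3)^2/((e1*d1)*(e2*d2)*(e3*d3)^2)) = (o1* o2* o3^2/(e1* e2* e3^2)) * (hz*(a1*a2*a3^2/(d1*d2*d3^2)))"
    using assms by (simp add: field_simps)
  also have "\<dots> = (o1* o2* o3^2/(e1* e2* e3^2)) * (hz + c1*a1/d1 - c0*a2/d2)" using assms by simp
  also have "\<dots> = hz*(o1* o2* o3^2/(e1* e2* e3^2)) + c1*(o1*a1)* o2* o3^2/((e1*d1)* e2* e3^2) - c0* o1*(o2*a2)* o3^2/(e1*(e2*d2)* e3^2)"
    using assms by (simp add: field_simps)
  finally show ?thesis .
qed

lemma rearr2: "- x*p*r*(o1*a1)* o2* o3^2/(s*t*(e1*d1)* e2* e3^2) = (- x*p*r/(s*t))*(o1*a1)* o2* o3^2/((e1*d1)* e2* e3^2)"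
  for x p r o1 a1 o2 o3 s t e1 d1 e2 e3 :: real
  by (simp add: divide_inverse inverse_mult_distrib mult_ac)
lemma rearr3: "- x*p*r* o1*(o2*a2)* o3^2/(s*t* e1*(e2*d2)* e3^2) = (- x*p*r/(s*t))* o1*(o2*a2)* o3^2/(e1*(e2*d2)* e3^2)"
  for x p r o1 a2 o2 o3 s t e1 d2 e2 e3 :: real
  by (simp add: divide_inverse inverse_mult_distrib mult_ac)

lemma h1: "a = 1 + c*d \<Longrightarrow> (q::real)^a = q*(q^c)^d" by (simp add: power_add power_mult)
lemma h2: "a = b+c+e*f \<Longrightarrow> (q::real)^a = q^b*q^c*(q^e)^f" by (simp add: power_add power_mult)
lemma h3: "a = 1+c \<Longrightarrow> (q::real)^a = q*q^c" by (simp add: power_add)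
lemma h4: "a = b+c \<Longrightarrow> (q::real)^a = q^b*q^c" by (simp add: power_add)
lemma h5: "a = b+c*d+e*f \<Longrightarrow> (q::real)^a = q^b*(q^c)^d*(q^e)^f" by (simp add: power_add power_mult)
lemma h6: "a = b+c*d \<Longrightarrow> (q::real)^a = q^b*(q^c)^d" by (simp add: power_add power_mult)
lemma h7: "a = c*d \<Longrightarrow> (q::real)^a = (q^c)^d" by (simp add: power_mult)
lemma h8: "a = c \<Longrightarrow> (q::real)^a = q^c" by simp

lemma qp: "a = b \<Longrightarrow> (q::real)^a = q^b" by simp

lemma lt1: "0 \<le> a \<Longrightarrow> a < 1 \<Longrightarrow> 0 \<le> b \<Longrightarrow> b \<le> 1 \<Longrightarrow> a*b < (1::real)"
  by (metis le_less_trans mult_left_le)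

lemma step:
  assumes q: "0 < q" "q < 1"
  shows "hh q k * WW q (Suc (m+k)) k = hh q k * WW q (m+k) k + GG q (m+k) (Suc k) - GG q (m+k) k"
proof -
  define z where "z = q^k"
  define w where "w = q^(2*m)"
  define o1 where "o1 = Op q (m+k+k+1)"
  define o2 where "o2 = Op q m"
  define o3 where "o3 = Op q (m+k+1)"
  define e1 where "e1 = Ep q (m+k+k+1)"
  define e2 where "e2 = Ep q m"
  define e3 where "e3 = Ep q (m+k)"
  have zp: "0 < z" "z \<le> 1" using q by (auto simp: z_def power_le_one)
  have wp: "0 < w" "w \<le> 1" using q by (auto simp: w_def power_le_one)
  have "0 < e1" "0 < e2" "0 < e3" unfolding e1_def e2_def e3_def using Ep_pos[OF q] by auto
  then have ep: "e1 \<noteq> 0" "e2 \<noteq> 0" "e3 \<noteq> 0" by auto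
  have pw0: "q^(2*k+1) = q*(q^k)^2" "q^(2*(m+k+k+1)+1) = q^3*q^(2*m)*(q^k)^4" "q^(2*m+1) = q*q^(2*m)"
    "q^(2*(m+k+1)+1) = q^3*q^(2*m)*(q^k)^2" "q^(2*(m+k+k+1)+2) = q^4*q^(2*m)*(q^k)^4" "q^(2*m+2) = q^2*q^(2*m)"
    "q^(2*(m+k)+2) = q^2*q^(2*m)*(q^k)^2" "q^(4*(m+k)+5) = q^5*(q^(2*m))^2*(q^k)^4" "q^(2*Suc k) = q^2*(q^k)^2"
    "q^(2*k) = (q^k)^2" "q^(Suc k) = q*q^k" "q^(2*(m+k)+3) = q^3*q^(2*m)*(q^k)^2"
    apply (rule h1, simp) apply (rule h2, simp) apply (rule h3, simp) apply (rule h2, simp) apply (rule h2, simp) apply (rule h4, simp)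
    apply (rule h2, simp) apply (rule h5, simp) apply (rule h6, simp) apply (rule h7, simp) apply (rule h3, simp) apply (rule h2, simp)
    done
  note pw = pw0[folded z_def w_def]
  have lt: "\<And>a. 0 < a \<Longrightarrow> a < 1 \<Longrightarrow> 1 - a \<noteq> (0::real)" by simp
  have small: "q*z^2 < 1" "q^4*w*z^4 < 1" "q^2*w < 1" "q^2*w*z^2 < 1" "q^3*w*z^2 < 1"
  proof -
    have z2: "z^2 \<le> 1" "z^4 \<le> 1" "0 \<le> z^2" "0 \<le> z^4" using zp by (auto simp: power_le_one)
    have b: "w*z^2 \<le> 1" "w*z^4 \<le> 1" "0 \<le> w*z^2" "0 \<le> w*z^4"
      using z2 wp by (auto intro: mult_le_one)
    have qq: "q^2 < 1" "q^3 < 1" "q^4 < 1" "0 \<le> q^2" "0\<le>q^3" "0\<le>q^4" using q by (auto simp: power_less_one_iff)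
    show "q*z^2 < 1" using lt1[of q "z^2"] q z2 by auto
    show "q^4*w*z^4 < 1" using lt1[of "q^4" "w*z^4"] qq b by (auto simp: mult.assoc)
    show "q^2*w < 1" using lt1[of "q^2" "w"] qq wp by (auto simp: mult.assoc)
    show "q^2*w*z^2 < 1" using lt1[of "q^2" "w*z^2"] qq b by (auto simp: mult.assoc)
    show "q^3*w*z^2 < 1" using lt1[of "q^3" "w*z^2"] qq b by (auto simp: mult.assoc)
  qed
  have nz: "1 - q*z^2 \<noteq> 0" "1 - q^4*w*z^4 \<noteq> 0" "1 - q^2*w \<noteq> 0" "1 - q^2*w*z^2 \<noteq> 0" "1 - q^3*w*z^2 \<noteq> 0"
    using small by auto
  have W1: "WW q (Suc (m+k)) k = (o1*(1-q^3*w*z^4))*(o2*(1-q*w))*(o3*(1-q^3*w*z^2))^2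
      /((e1*(1-q^4*w*z^4))*(e2*(1-q^2*w))*(e3*(1-q^2*w*z^2))^2)"
  proof -
    have "WW q (Suc (m+k)) k = Op q (Suc (m+k+k+1)) * Op q (Suc m) * Op q (Suc (m+k+1))^2
       / (Ep q (Suc (m+k+k+1)) * Ep q (Suc m) * Ep q (Suc (m+k))^2)"
      unfolding WW_def by (simp add: algebra_simps)
    then show ?thesis by (simp only: Op_Suc Ep_Suc pw o1_def[symmetric] o2_def[symmetric] o3_def[symmetric]
        e1_def[symmetric] e2_def[symmetric] e3_def[symmetric])
  qed
  have W0: "WW q (m+k) k = o1* o2* o3^2/(e1* e2* e3^2)"
    unfolding WW_def o1_def o2_def o3_def e1_def e2_def e3_def by (simp add: algebra_simps)
  have H: "hh q k = z*(1+q*z^2)/(1-q*z^2)^2"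
    unfolding hh_def by (simp only: pw z_def)
  have G1: "GG q (m+k) (Suc k) = -(q^2*w*z^2/(q*z))*(1-q^5*w^2*z^4)*(1-q^2*z^2)*(o1*(1-q^3*w*z^4))* o2* o3^2
      /((1-q^2*w*z^2)^3*(1-q^3*w*z^2)*(e1*(1-q^4*w*z^4))* e2* e3^2)"
  proof -
    have "GG q (m+k) (Suc k) = - (q^(2*(m+k)+2)/q^(Suc k)) * (1-q^(4*(m+k)+5))*(1-q^(2*Suc k)) * Op q (Suc (m+k+k+1))*Op q m*Op q (m+k+1)^2
      / ((1-q^(2*(m+k)+2))^3*(1-q^(2*(m+k)+3))*Ep q (Suc (m+k+k+1))*Ep q m*Ep q (m+k)^2)"
      unfolding GG_def by (simp add: algebra_simps)
    then show ?thesis by (simp only: Op_Suc Ep_Suc pw o1_def[symmetric] o2_def[symmetric] o3_def[symmetric]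
        e1_def[symmetric] e2_def[symmetric] e3_def[symmetric])
  qed
  have G0: "GG q (m+k) k = -(q^2*w*z^2/z)*(1-q^5*w^2*z^4)*(1-z^2)* o1*(o2*(1-q*w))* o3^2
      /((1-q^2*w*z^2)^3*(1-q^3*w*z^2)* e1*(e2*(1-q^2*w))* e3^2)"
  proof -
    have "GG q (m+k) k = - (q^(2*(m+k)+2)/q^k) * (1-q^(4*(m+k)+5))*(1-q^(2*k)) * Op q (m+k+k+1)*Op q (Suc m)*Op q (m+k+1)^2
      / ((1-q^(2*(m+k)+2))^3*(1-q^(2*(m+k)+3))*Ep q (m+k+k+1)*Ep q (Suc m)*Ep q (m+k)^2)"
      unfolding GG_def by (simp add: algebra_simps)
    then show ?thesis by (simp only: Op_Suc Ep_Suc pw o1_def[symmetric] o2_def[symmetric] o3_def[symmetric]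
        e1_def[symmetric] e2_def[symmetric] e3_def[symmetric] z_def[symmetric])
  qed
  have qz1: "q^2*w*z^2/(q*z) = q*w*z" using q zp by (simp add: field_simps power2_eq_square)
  have qz0: "q^2*w*z^2/z = q^2*w*z" using zp by (simp add: field_simps power2_eq_square)
  have A: "z*(1+q*z^2)/(1-q*z^2)^2 * ((1-q^3*w*z^4)*(1-q*w)*(1-q^3*w*z^2)^2/((1-q^4*w*z^4)*(1-q^2*w)*(1-q^2*w*z^2)^2))
   = z*(1+q*z^2)/(1-q*z^2)^2
     + (- (q^2*w*z^2/(q*z))*(1-q^5*w^2*z^4)*(1-q^2*z^2)/((1-q^2*w*z^2)^3*(1-q^3*w*z^2)))*(1-q^3*w*z^4)/(1-q^4*w*z^4)
     - (- (q^2*w*z^2/z)*(1-q^5*w^2*z^4)*(1-z^2)/((1-q^2*w*z^2)^3*(1-q^3*w*z^2)))*(1-q*w)/(1-q^2*w)"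
    using alg1[OF nz] unfolding qz1 qz0 by (simp add: divide_inverse inverse_mult_distrib mult_ac)
  show ?thesis
    unfolding W1 W0 H G1 G0 rearr2 rearr3
    by (rule rearr1[OF _ _ _ ep A]) (use nz in auto)
qed

lemma last_term:
  assumes q: "0 < q" "q < 1"
  shows "hh q (Suc N) * WW q (Suc N) (Suc N) = - GG q N (Suc N)"
proof -
  define y where "y = q^(N+1)"
  define O1 where "O1 = Op q (2*N+2)"
  define O3 where "O3 = Op q (N+1)"
  define E1 where "E1 = Ep q (2*N+2)"
  define E3 where "E3 = Ep q N"
  have "q^(N+1) < 1" by (rule pow_lt1) (use q in auto)
  then have yp: "0 < y" "y < 1" using q by (auto simp: y_def)
  have "0 < E1" "0 < E3" unfolding E1_def E3_def using Ep_pos[OF q] by auto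
  then have ep: "E1 \<noteq> 0" "E3 \<noteq> 0" by auto
  have pw0: "q^(Suc N) = q^(N+1)" "q^(2*Suc N+1) = q*(q^(N+1))^2" "q^(2*(2*N+2)+1) = q*(q^(N+1))^4"
     "q^(2*(N+1)+1) = q*(q^(N+1))^2" "q^(2*(2*N+2)+2) = q^2*(q^(N+1))^4" "q^(2*N+2) = (q^(N+1))^2"
     "q^(4*N+5) = q*(q^(N+1))^4" "q^(2*Suc N) = (q^(N+1))^2" "q^(2*N+3) = q*(q^(N+1))^2"
    apply (rule h8, simp) apply (rule h1, simp) apply (rule h1, simp) apply (rule h1, simp) apply (rule h6, simp) apply (rule h7, simp)
    apply (rule h1, simp) apply (rule h7, simp) apply (rule h1, simp)
    done
  note pw = pw0[folded y_def]
  have W: "WW q (Suc N) (Suc N) = (O1*(1 - q*y^4))*(O3*(1-q*y^2))^2/((E1*(1-q^2*y^4))*(E3*(1-y^2))^2)"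
  proof -
    have "WW q (Suc N) (Suc N) = Op q (Suc (2*N+2)) * Op q (Suc (N+1))^2 / (Ep q (Suc (2*N+2)) * Ep q (Suc N)^2)"
      unfolding WW_def by (simp add: algebra_simps mult_2 mult_2_right)
    then show ?thesis by (simp only: Op_Suc Ep_Suc pw O1_def[symmetric] O3_def[symmetric] E1_def[symmetric] E3_def[symmetric])
  qed
  have G: "GG q N (Suc N) = - (y^2/y)*(1-q*y^4)*(1-y^2)*O1*O3^2/((1-y^2)^3*(1-q*y^2)*E1*E3^2)"
  proof -
    have "GG q N (Suc N) = - (q^(2*N+2)/q^(Suc N)) * (1-q^(4*N+5))*(1-q^(2*Suc N)) * Op q (2*N+2)*Op q 0*Op q (N+1)^2
      / ((1-q^(2*N+2))^3*(1-q^(2*N+3))*Ep q (2*N+2)*Ep q 0*Ep q N^2)"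
    proof -
      have i: "N + Suc N + 1 = 2*N+2" "N+1-Suc N = 0" by auto
      show ?thesis by (simp only: GG_def i)
    qed
    then show ?thesis by (simp only: pw O1_def[symmetric] O3_def[symmetric] E1_def[symmetric] E3_def[symmetric] Op_0 Ep_0 mult_1_right)
  qed
  have H: "hh q (Suc N) = y*(1+q*y^2)/(1-q*y^2)^2"
    unfolding hh_def by (simp only: pw)
  have y2: "y^2 < 1" "0 < y^2" "y^4 \<le> y^2" "0 < y^4" using yp by (auto simp: power_less_one_iff power_decreasing)
  have n1: "1 - y^2 \<noteq> 0" "1 - q*y^2 \<noteq> 0" "1 + q*y^2 \<noteq> 0" "1 - q*y^4 \<noteq> 0"
  proof -
    have qy: "0 < q*y^2" using q yp by simp
    show "1 + q*y^2 \<noteq> 0" using qy by linarith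
    show "1 - y^2 \<noteq> 0" "1 - q*y^2 \<noteq> 0" "1 - q*y^4 \<noteq> 0"
      using y2 q lt1[of q "y^2"] lt1[of q "y^4"] by auto
  qed
  obtain a b c f where d: "a = 1 - y^2" "b = 1 - q*y^2" "c = 1 + q*y^2" "f = 1 - q*y^4" by blast
  have e: "1 - q^2*y^4 = b*c" unfolding d by algebra
  have nz: "a \<noteq> 0" "b \<noteq> 0" "c \<noteq> 0" "y \<noteq> 0" using n1 d yp by auto
  have "y*c/b^2 * ((O1*f)*(O3*b)^2/((E1*(b*c))*(E3*a)^2)) = - (- (y^2/y)*f*a*O1*O3^2/(a^3*b*E1*E3^2))"
    using nz ep by (simp add: field_simps power2_eq_square power3_eq_cube)
  note X = this[unfolded d]
  have e': "1 - q^2*y^4 = (1-q*y^2)*(1+q*y^2)" by algebra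
  show ?thesis unfolding W G H e' by (rule X)
qed

lemma tele_atMost: "(\<Sum>k\<le>n. f (Suc k) - f k) = f (Suc n) - (f 0 :: real)"
  by (induction n) auto

lemma GG0 [simp]: "GG q N 0 = 0" by (simp add: GG_def)

lemma FI:
  assumes q: "0 < q" "q < 1"
  shows "(\<Sum>k\<le>N. hh q k * WW q N k) = 1"
proof (induction N)
  case 0
  have "q^2 < 1" by (rule pow_lt1) (use q in auto)
  then have nz: "1 - q \<noteq> 0" "1 + q \<noteq> 0" using q by auto
  have "hh q 0 * WW q 0 0 = (1+q)/(1-q)^2 * ((1-q)*(1-q)^2/((1-q)*(1+q)))"
    unfolding hh_def WW_def Op_def Ep_def by (simp add: power2_eq_square algebra_simps)
  also have "(1-q)*(1-q)^2/((1-q)*(1+q)) = (1-q)^2/(1+q)" using nz by simp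
  also have "(1+q)/(1-q)^2 * ((1-q)^2/(1+q)) = 1" using nz by simp
  finally show ?case by simp
next
  case (Suc N)
  have "(\<Sum>k\<le>Suc N. hh q k * WW q (Suc N) k) = (\<Sum>k\<le>N. hh q k * WW q (Suc N) k) + hh q (Suc N) * WW q (Suc N) (Suc N)"
    by simp
  also have "(\<Sum>k\<le>N. hh q k * WW q (Suc N) k) = (\<Sum>k\<le>N. hh q k * WW q N k + (GG q N (Suc k) - GG q N k))"
  proof (rule sum.cong)
    fix k assume "k \<in> {..N}"
    then have e: "N - k + k = N" by auto
    show "hh q k * WW q (Suc N) k = hh q k * WW q N k + (GG q N (Suc k) - GG q N k)"
      using step[OF q, of k "N-k"] unfolding e by simp
  qed simp
  also have "\<dots> = 1 + (GG q N (Suc N) - GG q N 0)"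
    by (simp add: sum.distrib Suc.IH tele_atMost)
  finally show ?case using last_term[OF q, of N] by simp
qed

lemma qpoch_conv:
  fixes q z :: real assumes "0 < q" "q < 1"
  shows "convergent_prod (\<lambda>k. 1 - z*q^k)"
proof -
  have "summable (\<lambda>k. \<bar>z\<bar> * q^k)"
    using assms by (intro summable_mult summable_geometric) simp
  then have "summable (\<lambda>k. norm ((1 - z*q^k) - 1))"
    using assms by (simp add: abs_mult)
  then show ?thesis
    by (intro abs_convergent_prod_imp_convergent_prod summable_imp_abs_convergent_prod)
qed

lemma q2: "0 < q \<Longrightarrow> q < 1 \<Longrightarrow> 0 < q^2 \<and> q^2 < (1::real)"
  using pow_lt1[of q 2] by simp

lemma Ep_lim:
  assumes q: "0 < q" "q < 1"
  shows "(\<lambda>n. Ep q n) \<longlonglongrightarrow> qpoch_inf (q^2) (q^2)"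
proof -
  have c: "convergent_prod (\<lambda>k. 1 - q^2*(q^2)^k)"
    using qpoch_conv[of "q^2" "q^2"] q2[OF q] by auto
  have "(\<lambda>n. \<Prod>i\<le>n. 1 - q^2*(q^2)^i) \<longlonglongrightarrow> qpoch_inf (q^2) (q^2)"
    using convergent_prod_LIMSEQ[OF c] unfolding qpoch_inf_def .
  moreover have "(\<Prod>i\<le>n. 1 - q^2*(q^2)^i) = Ep q (Suc n)" for n
    unfolding Ep_def lessThan_Suc_atMost
    by (intro prod.cong refl) (simp add: power_mult[symmetric] power_add[symmetric] mult.commute)
  ultimately have "(\<lambda>n. Ep q (Suc n)) \<longlonglongrightarrow> qpoch_inf (q^2) (q^2)" by simp
  then show ?thesis by (rule filterlim_sequentially_Suc[THEN iffD1])
qed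

lemma Op_lim:
  assumes q: "0 < q" "q < 1"
  shows "(\<lambda>n. Op q n) \<longlonglongrightarrow> qpoch_inf q (q^2)"
proof -
  have c: "convergent_prod (\<lambda>k. 1 - q*(q^2)^k)"
    using qpoch_conv[of "q^2" "q"] q2[OF q] by auto
  have "(\<lambda>n. \<Prod>i\<le>n. 1 - q*(q^2)^i) \<longlonglongrightarrow> qpoch_inf q (q^2)"
    using convergent_prod_LIMSEQ[OF c] unfolding qpoch_inf_def .
  moreover have "(\<Prod>i\<le>n. 1 - q*(q^2)^i) = Op q (Suc n)" for n
    unfolding Op_def lessThan_Suc_atMost
    by (intro prod.cong refl) (simp add: power_mult[symmetric] mult.commute)
  ultimately have "(\<lambda>n. Op q (Suc n)) \<longlonglongrightarrow> qpoch_inf q (q^2)" by simp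
  then show ?thesis by (rule filterlim_sequentially_Suc[THEN iffD1])
qed

lemma Einf_pos:
  assumes q: "0 < q" "q < 1"
  shows "0 < qpoch_inf (q^2) (q^2)"
proof -
  have c: "convergent_prod (\<lambda>k. 1 - q^2*(q^2)^k)"
    using qpoch_conv[of "q^2" "q^2"] q2[OF q] by auto
  have "q^2*(q^2)^i < 1" for i
    using lt1[of "q^2" "(q^2)^i"] q2[OF q] by (simp add: power_le_one)
  then have "1 - q^2*(q^2)^i \<noteq> 0" for i by (metis less_irrefl eq_iff_diff_eq_0)
  then have "qpoch_inf (q^2) (q^2) \<noteq> 0" unfolding qpoch_inf_def by (rule prodinf_nonzero[OF c])
  moreover have "0 \<le> qpoch_inf (q^2) (q^2)"
    by (rule LIMSEQ_le_const[OF Ep_lim[OF q]]) (use Ep_pos[OF q] less_imp_le in blast)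
  ultimately show ?thesis by simp
qed

lemma Oinf_pos:
  assumes q: "0 < q" "q < 1"
  shows "0 < qpoch_inf q (q^2)"
proof -
  have c: "convergent_prod (\<lambda>k. 1 - q*(q^2)^k)"
    using qpoch_conv[of "q^2" "q"] q2[OF q] by auto
  have "q*(q^2)^i < 1" for i
    using lt1[of "q" "(q^2)^i"] q2[OF q] q by (simp add: power_le_one)
  then have "1 - q*(q^2)^i \<noteq> 0" for i by (metis less_irrefl eq_iff_diff_eq_0)
  then have "qpoch_inf q (q^2) \<noteq> 0" unfolding qpoch_inf_def by (rule prodinf_nonzero[OF c])
  moreover have "0 \<le> qpoch_inf q (q^2)"
    by (rule LIMSEQ_le_const[OF Op_lim[OF q]]) (use Op_pos[OF q] less_imp_le in blast)
  ultimately show ?thesis by simp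
qed

lemma Ep_ge:
  assumes q: "0 < q" "q < 1"
  shows "qpoch_inf (q^2) (q^2) \<le> Ep q n"
proof (rule decseq_ge[OF _ Ep_lim[OF q]])
  show "decseq (Ep q)"
  proof (rule decseq_SucI)
    fix n
    have "0 \<le> q^(2*n+2)" using q by simp
    then show "Ep q (Suc n) \<le> Ep q n" unfolding Ep_Suc
      using Ep_pos[OF q, of n] by (simp add: mult_left_le)
  qed
qed

lemma WW_lim:
  assumes q: "0 < q" "q < 1"
  shows "(\<lambda>N. WW q N k) \<longlonglongrightarrow> qpoch_inf q (q^2)^4 / qpoch_inf (q^2) (q^2)^4"
proof -
  let ?O = "qpoch_inf q (q^2)" and ?E = "qpoch_inf (q^2) (q^2)"
  have o1: "(\<lambda>N. Op q (N+k+1)) \<longlonglongrightarrow> ?O"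
    using LIMSEQ_ignore_initial_segment[OF Op_lim[OF q], of "k+1"] by (simp add: add.assoc)
  have o2: "(\<lambda>N. Op q (N-k)) \<longlonglongrightarrow> ?O"
    by (rule filterlim_compose[OF Op_lim[OF q] filterlim_minus_const_nat_at_top])
  have o3: "(\<lambda>N. Op q (N+1)) \<longlonglongrightarrow> ?O"
    using LIMSEQ_ignore_initial_segment[OF Op_lim[OF q], of 1] .
  have e1: "(\<lambda>N. Ep q (N+k+1)) \<longlonglongrightarrow> ?E"
    using LIMSEQ_ignore_initial_segment[OF Ep_lim[OF q], of "k+1"] by (simp add: add.assoc)
  have e2: "(\<lambda>N. Ep q (N-k)) \<longlonglongrightarrow> ?E"
    by (rule filterlim_compose[OF Ep_lim[OF q] filterlim_minus_const_nat_at_top])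
  have e3: "(\<lambda>N. Ep q N) \<longlonglongrightarrow> ?E" by (rule Ep_lim[OF q])
  have "?E \<noteq> 0" using Einf_pos[OF q] by simp
  then have "(\<lambda>N. WW q N k) \<longlonglongrightarrow> ?O*?O*?O^2/(?E*?E*?E^2)"
    unfolding WW_def by (intro tendsto_intros o1 o2 o3 e1 e2 e3) simp
  also have "?O*?O*?O^2/(?E*?E*?E^2) = ?O^4/?E^4" by (simp add: eval_nat_numeral)
  finally show ?thesis .
qed

lemma WW_bound:
  assumes q: "0 < q" "q < 1"
  shows "0 \<le> WW q N k \<and> WW q N k \<le> 1 / qpoch_inf (q^2) (q^2)^4"
proof -
  let ?E = "qpoch_inf (q^2) (q^2)"
  have E: "0 < ?E" by (rule Einf_pos[OF q])
  have p: "0 < Op q (N+k+1)" "0 < Op q (N-k)" "0 < Op q (N+1)" using Op_pos[OF q] by auto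
  have l: "Op q (N+k+1) \<le> 1" "Op q (N-k) \<le> 1" "Op q (N+1) \<le> 1" using Op_le1[OF q] by auto
  have l2: "Op q (N+1)^2 \<le> 1" using p l by (simp add: power_le_one)
  have ab: "Op q (N+k+1)*Op q (N-k) \<le> 1" using p l by (rule_tac mult_le_one) auto
  have num: "0 \<le> Op q (N+k+1)*Op q (N-k)*Op q (N+1)^2" "Op q (N+k+1)*Op q (N-k)*Op q (N+1)^2 \<le> 1"
    using p apply simp
    using ab l2 p by (rule_tac mult_le_one) auto
  have "?E*?E*?E^2 \<le> Ep q (N+k+1)*Ep q (N-k)*Ep q N^2"
    using Ep_ge[OF q] E Ep_pos[OF q] by (intro mult_mono power_mono) (auto intro: less_imp_le mult_nonneg_nonneg)
  then have den: "?E^4 \<le> Ep q (N+k+1)*Ep q (N-k)*Ep q N^2" by (simp add: eval_nat_numeral)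
  have dp: "0 < Ep q (N+k+1)*Ep q (N-k)*Ep q N^2"
    using Ep_pos[OF q, of "N+k+1"] Ep_pos[OF q, of "N-k"] Ep_pos[OF q, of N] by simp
  show ?thesis unfolding WW_def
  proof
    show "0 \<le> Op q (N+k+1)*Op q (N-k)*Op q (N+1)^2 / (Ep q (N+k+1)*Ep q (N-k)*Ep q N^2)"
      using num dp by simp
    show "Op q (N+k+1)*Op q (N-k)*Op q (N+1)^2 / (Ep q (N+k+1)*Ep q (N-k)*Ep q N^2) \<le> 1 / ?E^4"
      using num den dp E by (intro frac_le) auto
  qed
qed

lemma hh_bound:
  assumes q: "0 < q" "q < 1"
  shows "0 \<le> hh q k \<and> hh q k \<le> 2/(1-q)^2 * q^k"
proof -
  have a: "q^(2*k+1) \<le> q" using q mult_left_le[of "q^(2*k)" q] power_le_one[of q "2*k"] by simp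
  have b: "0 \<le> q^(2*k+1)" using q by simp
  have a2: "q^(2*k+1) \<le> 1" using a q by linarith
  have c: "0 < 1 - q" using q by simp
  have d: "(1-q)^2 \<le> (1-q^(2*k+1))^2" using a c by (intro power_mono) auto
  have e: "0 < (1-q)^2" using c by simp
  have "hh q k = q^k*(1+q^(2*k+1))/(1-q^(2*k+1))^2" by (simp add: hh_def)
  moreover have "q^k*(1+q^(2*k+1))/(1-q^(2*k+1))^2 \<le> (q^k*2)/(1-q)^2"
    using a a2 b d e q c by (intro frac_le) (auto intro: mult_left_mono)
  moreover have "0 \<le> q^k*(1+q^(2*k+1))/(1-q^(2*k+1))^2" using b q by simp
  ultimately show ?thesis by (simp add: mult.commute)
qed

lemma hh_summable:
  assumes q: "0 < q" "q < 1"
  shows "summable (hh q)"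
proof (rule summable_comparison_test[of _ "\<lambda>k. 2/(1-q)^2 * q^k"])
  show "\<exists>N. \<forall>n\<ge>N. norm (hh q n) \<le> 2/(1-q)^2 * q^n" using hh_bound[OF q] by auto
  show "summable (\<lambda>k. 2/(1-q)^2 * q^k)" using q by (intro summable_mult summable_geometric) simp
qed

lemma sum_hh:
  assumes q: "0 < q" "q < 1"
  shows "suminf (hh q) = qpoch_inf (q^2) (q^2)^4 / qpoch_inf q (q^2)^4"
proof -
  let ?O = "qpoch_inf q (q^2)" and ?E = "qpoch_inf (q^2) (q^2)"
  define a where "a k N = (if k \<le> N then hh q k * WW q N k else 0)" for k N
  have lim: "(\<lambda>N. a k N) \<longlonglongrightarrow> hh q k * (?O^4/?E^4)" for k
  proof -
    have "(\<lambda>N. hh q k * WW q N k) \<longlonglongrightarrow> hh q k * (?O^4/?E^4)"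
      by (intro tendsto_mult tendsto_const WW_lim[OF q])
    moreover have "eventually (\<lambda>N. hh q k * WW q N k = a k N) sequentially"
      using eventually_ge_at_top[of k] by eventually_elim (simp add: a_def)
    ultimately show ?thesis by (rule Lim_transform_eventually)
  qed
  have bound: "eventually (\<lambda>(k,n). norm (a k n) \<le> hh q k * (1/?E^4)) (at_top \<times>\<^sub>F sequentially)"
  proof (intro always_eventually allI, clarify)
    fix k n
    show "norm (a k n) \<le> hh q k * (1/?E^4)"
    proof (cases "k \<le> n")
      case True
      have "hh q k * WW q n k \<le> hh q k * (1/?E^4)"
        using hh_bound[OF q, of k] WW_bound[OF q, of n k] by (intro mult_left_mono) auto
      moreover have "0 \<le> hh q k * WW q n k" using hh_bound[OF q, of k] WW_bound[OF q, of n k] by simp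
      ultimately show ?thesis using True by (simp add: a_def)
    next
      case False
      then show ?thesis using hh_bound[OF q, of k] Einf_pos[OF q] by (simp add: a_def)
    qed
  qed
  have sM: "summable (\<lambda>k. hh q k * (1/?E^4))" by (intro summable_mult2 hh_summable[OF q])
  have T: "(\<lambda>n. suminf (\<lambda>k. a k n)) \<longlonglongrightarrow> suminf (\<lambda>k. hh q k * (?O^4/?E^4))"
    using tannerys_theorem[OF lim bound sM] by simp
  have "suminf (\<lambda>k. a k n) = 1" for n
  proof -
    have "suminf (\<lambda>k. a k n) = (\<Sum>k\<le>n. a k n)" by (rule suminf_finite) (auto simp: a_def)
    also have "\<dots> = (\<Sum>k\<le>n. hh q k * WW q n k)" by (rule sum.cong) (auto simp: a_def)
    also have "\<dots> = 1" by (rule FI[OF q])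
    finally show ?thesis .
  qed
  then have "(\<lambda>n. 1::real) \<longlonglongrightarrow> suminf (\<lambda>k. hh q k * (?O^4/?E^4))" using T by simp
  then have "suminf (\<lambda>k. hh q k * (?O^4/?E^4)) = 1" using LIMSEQ_unique tendsto_const by blast
  then have "suminf (hh q) * (?O^4/?E^4) = 1" using suminf_mult2[OF hh_summable[OF q], of "?O^4/?E^4"] by (simp only:)
  moreover have "?O > 0" "?E > 0" using Oinf_pos[OF q] Einf_pos[OF q] by auto
  ultimately show ?thesis by (simp add: field_simps)
qed

definition "Nn q u = q^3*(1-q^3)*(1-q^5)*(1-u^5) + (-3*q^2*(1-q^5)^2)*(u-u^4)
   + (3*q+6*q^4-q^5-8*q^6-8*q^8-q^9+6*q^10+3*q^13)*(u^2-u^3)" for q u :: real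

lemma poly_tel:
  fixes q s :: real
  shows "(1-q)^3*(1-q^2)^3*(1-q^4)^3 * q^6* s^3*(1+q^3* s)*(1-q^3* s)
     + q^3*(1-q^3)*(1-q^5)*(1-q)*(1+q^3* s)*(1-q^3* s)*(1-q* s)^3*(1-q^5* s)^3
   = Nn q (q^2* s)*(1-q^5* s)^3 - q*Nn q (q^4* s)*(1-q* s)^3"
  unfolding Nn_def by algebra

lemma alg2:
  fixes q s t D0 :: real
  assumes d0: "D0 = (1-q)^3*(1-q^2)^3*(1-q^4)^3" and nz: "D0 \<noteq> 0" "1 - q* s \<noteq> 0" "1 - q^3* s \<noteq> 0" "1 - q^5* s \<noteq> 0"
  shows "(1+q^3* s)*(q^7*t* s^3)/((1-q* s)^3*(1-q^3* s)^2*(1-q^5* s)^3)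
     + (q^3*(1-q^3)*(1-q^5)*(1-q)/D0) * (q*t*(1+q^3* s)/(1-q^3* s)^2)
   = q*t*(Nn q (q^2* s)/D0)/((1-q* s)^3*(1-q^3* s)^3) - q^2*t*(Nn q (q^4* s)/D0)/((1-q^3* s)^3*(1-q^5* s)^3)"
proof -
  obtain A B C where d: "A = 1 - q* s" "B = 1 - q^3* s" "C = 1 - q^5* s" by blast
  have nz': "A \<noteq> 0" "B \<noteq> 0" "C \<noteq> 0" using nz d by auto
  define K where "K = D0*A^3*B^3*C^3"
  have e1: "(1+q^3* s)*(q^7*t* s^3)/(A^3*B^2*C^3) = (q^7*t* s^3*(1+q^3* s)*B*D0)/K"
    using nz' nz(1) by (simp add: K_def field_simps power3_eq_cube power2_eq_square mult_ac)
  have e2: "(q^3*(1-q^3)*(1-q^5)*(1-q)/D0) * (q*t*(1+q^3* s)/B^2) = (q^3*(1-q^3)*(1-q^5)*(1-q)*q*t*(1+q^3* s)*B*A^3*C^3)/K"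
    using nz' nz(1) by (simp add: K_def field_simps power3_eq_cube power2_eq_square mult_ac)
  have e3: "q*t*(Nn q (q^2* s)/D0)/(A^3*B^3) = q*t*Nn q (q^2* s)*C^3/K"
    using nz' nz(1) by (simp add: K_def field_simps power3_eq_cube power2_eq_square mult_ac)
  have e4: "q^2*t*(Nn q (q^4* s)/D0)/(B^3*C^3) = q^2*t*Nn q (q^4* s)*A^3/K"
    using nz' nz(1) by (simp add: K_def field_simps power3_eq_cube power2_eq_square mult_ac)
  have num: "q^7*t* s^3*(1+q^3* s)*B*D0 + q^3*(1-q^3)*(1-q^5)*(1-q)*q*t*(1+q^3* s)*B*A^3*C^3
       = q*t*Nn q (q^2* s)*C^3 - q^2*t*Nn q (q^4* s)*A^3"
  proof -
    have "q*t*((1-q)^3*(1-q^2)^3*(1-q^4)^3 * q^6* s^3*(1+q^3* s)*(1-q^3* s)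
     + q^3*(1-q^3)*(1-q^5)*(1-q)*(1+q^3* s)*(1-q^3* s)*(1-q* s)^3*(1-q^5* s)^3)
   = q*t*(Nn q (q^2* s)*(1-q^5* s)^3 - q*Nn q (q^4* s)*(1-q* s)^3)" by (simp only: poly_tel)
    then show ?thesis unfolding d d0 by algebra
  qed
  have "(1+q^3* s)*(q^7*t* s^3)/(A^3*B^2*C^3)
     + (q^3*(1-q^3)*(1-q^5)*(1-q)/D0) * (q*t*(1+q^3* s)/B^2)
   = q*t*(Nn q (q^2* s)/D0)/(A^3*B^3) - q^2*t*(Nn q (q^4* s)/D0)/(B^3*C^3)"
    unfolding e1 e2 e3 e4 add_divide_distrib[symmetric] diff_divide_distrib[symmetric] num ..
  then show ?thesis using d by simp
qed

definition D0 :: "real \<Rightarrow> real" where "D0 q = (1-q)^3*(1-q^2)^3*(1-q^4)^3"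
definition dd :: "real \<Rightarrow> nat \<Rightarrow> real" where
  "dd q n = q^(n+1) * (Nn q (q^(2*(n+1))) / D0 q) / ((1-q^(2*n+1))^3*(1-q^(2*n+3))^3)"
definition Rc :: "real \<Rightarrow> real" where "Rc q = q^3*(1-q^3)*(1-q^5)*(1-q)/D0 q"

lemma D0_pos: "0 < q \<Longrightarrow> q < 1 \<Longrightarrow> 0 < D0 q"
  unfolding D0_def using pow_lt1[of q 2] pow_lt1[of q 4] by simp

lemma tel:
  assumes q: "0 < q" "q < 1"
  shows "(1 + q^(2*(n+1)+1)) * q^(7*(n+1)) /
           ((1 - q^(2*(n+1)-1))^3 * (1 - q^(2*(n+1)+1))^2 * (1 - q^(2*(n+1)+3))^3)
         + Rc q * hh q (Suc n) = dd q n - dd q (Suc n)"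
proof -
  define t where "t = q^n"
  define s where "s = q^(2*n)"
  have pw0: "q^(2*(n+1)+1) = q^3*q^(2*n)" "q^(7*(n+1)) = q^7*q^n*(q^(2*n))^3"
    "q^(2*(n+1)-1) = q*q^(2*n)" "q^(2*(n+1)+3) = q^5*q^(2*n)" "q^(Suc n) = q*q^n"
    "q^(2*Suc n+1) = q^3*q^(2*n)" "q^(n+1) = q*q^n" "q^(2*(n+1)) = q^2*q^(2*n)"
    "q^(2*n+1) = q*q^(2*n)" "q^(2*n+3) = q^3*q^(2*n)" "q^(Suc n+1) = q^2*q^n"
    "q^(2*(Suc n+1)) = q^4*q^(2*n)" "q^(2*Suc n+3) = q^5*q^(2*n)"
    apply (rule h4, simp) apply (rule h2, simp) apply (rule h3, simp) apply (rule h4, simp)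
    apply (rule h3, simp) apply (rule h4, simp) apply (rule h3, simp) apply (rule h4, simp)
    apply (rule h3, simp) apply (rule h4, simp) apply (rule h4, simp) apply (rule h4, simp)
    apply (rule h4, simp) done
  note pw = pw0[folded s_def t_def]
  have sp: "0 < s" "s \<le> 1" using q by (auto simp: s_def power_le_one)
  have "q^3 < 1" "q^5 < 1" using pow_lt1[OF q] by auto
  then have nz: "1 - q* s \<noteq> 0" "1 - q^3* s \<noteq> 0" "1 - q^5* s \<noteq> 0"
    using lt1[of q s] lt1[of "q^3" s] lt1[of "q^5" s] sp q by auto
  have d0: "D0 q \<noteq> 0" using D0_pos[OF q] by simp
  show ?thesis
    unfolding dd_def hh_def Rc_def pw
    using alg2[OF D0_def d0 nz, of t] by simp
qed

lemma Nn_tendsto: "(f \<longlongrightarrow> l) F \<Longrightarrow> ((\<lambda>x. Nn q (f x)) \<longlongrightarrow> Nn q l) F"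
  unfolding Nn_def by (intro tendsto_intros)

lemma dd_lim:
  assumes q: "0 < q" "q < 1"
  shows "dd q \<longlonglongrightarrow> 0"
proof -
  have e: "dd q = (\<lambda>n. q*q^n * (Nn q (q^2*(q^2)^n) / D0 q) / ((1-q*(q^2)^n)^3*(1-q^3*(q^2)^n)^3))"
  proof (rule ext)
    fix n
    have p: "q^(n+1) = q*q^n" "q^(2*(n+1)) = q^2*(q^2)^n" "q^(2*n+1) = q*(q^2)^n" "q^(2*n+3) = q^3*(q^2)^n"
      apply (rule h3, simp) apply (rule h6, simp) apply (rule h1, simp) apply (rule h6, simp) done
    show "dd q n = q*q^n * (Nn q (q^2*(q^2)^n) / D0 q) / ((1-q*(q^2)^n)^3*(1-q^3*(q^2)^n)^3)"
      unfolding dd_def p ..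
  qed
  have l1: "(\<lambda>n. q^n) \<longlonglongrightarrow> 0" using q by (intro LIMSEQ_power_zero) simp
  have l2: "(\<lambda>n. (q^2)^n) \<longlonglongrightarrow> 0" using q2[OF q] by (intro LIMSEQ_power_zero) simp
  have "(\<lambda>n. q*q^n * (Nn q (q^2*(q^2)^n) / D0 q) / ((1-q*(q^2)^n)^3*(1-q^3*(q^2)^n)^3))
     \<longlonglongrightarrow> q*0 * (Nn q (q^2*0) / D0 q) / ((1-q*0)^3*(1-q^3*0)^3)"
    by (intro tendsto_intros Nn_tendsto l1 l2) (use q q2[OF q] D0_pos[OF q] in auto)
  then show ?thesis unfolding e by simp
qed

lemma X0_id:
  assumes q: "0 < q" "q < 1"
  shows "(1 + q) * q^3 / ((1 - q)^5 * (1 - q^3)^3) = dd q 0 + Rc q * hh q 0"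
proof -
  have "q^3 < 1" using pow_lt1[OF q] by auto
  then have nz: "1 - q \<noteq> 0" "1 - q^3 \<noteq> 0" using q by auto
  have d0: "D0 q \<noteq> 0" using D0_pos[OF q] by simp
  obtain a b D where d: "a = 1 - q" "b = 1 - q^3" "D = D0 q" by blast
  have nz': "a \<noteq> 0" "b \<noteq> 0" "D \<noteq> 0" using nz d0 d by auto
  have D: "D = (1-q)^3*(1-q^2)^3*(1-q^4)^3" using d D0_def by simp
  have "(1 + q) * q^3 / (a^5 * b^3) = q * (Nn q (q^2) / D) / (a^3*b^3) + q^3*b*(1-q^5)*a/D * ((1+q)/a^2)"
    using nz' apply (simp add: field_simps)
    unfolding d(1,2) D Nn_def by algebra
  then show ?thesis unfolding dd_def Rc_def hh_def using d by simp
qed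

lemma RHS_id:
  assumes q: "0 < q" "q < 1"
  shows "(gosper_pi_q q)^2 * (1 + q + q^2) * (1 + q + q^2 + q^3 + q^4) * q powr (5/2)
      / ((1 + q^2)^3 * (1 - q^2)^8) = Rc q * (qpoch_inf (q^2) (q^2)^4 / qpoch_inf q (q^2)^4)"
proof -
  let ?O = "qpoch_inf q (q^2)" and ?E = "qpoch_inf (q^2) (q^2)"
  have p: "(q powr (1/4))^2 * q powr (5/2) = q^3"
  proof -
    have "(q powr (1/4))^2 * q powr (5/2) = q powr (1/4) * q powr (1/4) * q powr (5/2)"
      by (simp add: power2_eq_square)
    also have "\<dots> = q powr (1/4 + 1/4 + 5/2)" by (simp only: powr_add)
    also have "\<dots> = q powr 3" by simp
    also have "\<dots> = q^3" using q by simp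
    finally show ?thesis .
  qed
  have "q^2 < 1" "q^4 < 1" "q^3 < 1" using pow_lt1[OF q] by auto
  then have nz1: "1 - q \<noteq> 0" "1 - q^2 \<noteq> 0" "1 - q^4 \<noteq> 0" using q by auto
  have nz2: "1 + q^2 \<noteq> 0" using zero_le_power2[of q] by linarith
  note nz = nz1(1) nz1(2) nz2 nz1(3)
  have "?O > 0" using Oinf_pos[OF q] by simp
  then have o: "?O \<noteq> 0" by simp
  have "(gosper_pi_q q)^2 * (1 + q + q^2) * (1 + q + q^2 + q^3 + q^4) * q powr (5/2)
      / ((1 + q^2)^3 * (1 - q^2)^8)
    = ((1 - q^2)^2 * ((q powr (1/4))^2 * q powr (5/2)) * (?E^4/?O^4)) * (1 + q + q^2) * (1 + q + q^2 + q^3 + q^4)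
      / ((1 + q^2)^3 * (1 - q^2)^8)"
  proof -
    have g: "(gosper_pi_q q)^2 = (1-q^2)^2*(q powr (1/4))^2*(?E^4/?O^4)"
      unfolding gosper_pi_q_def by (simp add: power_mult_distrib power_divide power_mult[symmetric])
    show ?thesis unfolding g by (simp only: mult_ac)
  qed
  also have "\<dots> = ((1 - q^2)^2 * q^3 * (?E^4/?O^4)) * (1 + q + q^2) * (1 + q + q^2 + q^3 + q^4)
      / ((1 + q^2)^3 * (1 - q^2)^8)" unfolding p ..
  also have "\<dots> = Rc q * (?E^4/?O^4)"
  proof -
    obtain a b c D where d: "a = 1 - q" "b = 1 - q^2" "c = 1 + q^2" "D = D0 q" by blast
    have D: "D = a^3*b^3*(b*c)^3" unfolding d D0_def by (simp add: algebra_simps power2_eq_square eval_nat_numeral)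
    have nz': "a \<noteq> 0" "b \<noteq> 0" "c \<noteq> 0" using nz d by auto
    have "(b^2 * q^3 * (?E^4/?O^4)) * (1 + q + q^2) * (1 + q + q^2 + q^3 + q^4) / (c^3 * b^8)
       = q^3*(1-q^3)*(1-q^5)*a/D * (?E^4/?O^4)"
      unfolding D using nz' o apply (simp add: field_simps)
      unfolding d by algebra
    then show ?thesis unfolding Rc_def d by simp
  qed
  finally show ?thesis .
qed

theorem mainTheorem17:
  fixes q :: real
  assumes "0 < q" and "q < 1"
  shows "(1 + q) * q^3 / ((1 - q)^5 * (1 - q^3)^3)
      - (\<Sum>n. (1 + q^(2*(n+1)+1)) * q^(7*(n+1)) /
           ((1 - q^(2*(n+1)-1))^3 * (1 - q^(2*(n+1)+1))^2 * (1 - q^(2*(n+1)+3))^3))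
    = (gosper_pi_q q)^2 * (1 + q + q^2) * (1 + q + q^2 + q^3 + q^4) * q powr (5/2)
      / ((1 + q^2)^3 * (1 - q^2)^8)"
proof -
  have q: "0 < q" "q < 1" using assms by auto
  let ?S = "\<lambda>n. (1 + q^(2*(n+1)+1)) * q^(7*(n+1)) /
           ((1 - q^(2*(n+1)-1))^3 * (1 - q^(2*(n+1)+1))^2 * (1 - q^(2*(n+1)+3))^3)"
  have t: "(\<lambda>n. ?S n + Rc q * hh q (Suc n)) sums (dd q 0 - 0)"
  proof -
    have "(\<lambda>n. dd q n - dd q (Suc n)) sums (dd q 0 - 0)" by (rule telescope_sums'[OF dd_lim[OF q]])
    moreover have "(\<lambda>n. ?S n + Rc q * hh q (Suc n)) = (\<lambda>n. dd q n - dd q (Suc n))"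
      by (rule ext) (rule tel[OF q])
    ultimately show ?thesis by simp
  qed
  have h: "(\<lambda>n. Rc q * hh q (Suc n)) sums (Rc q * (suminf (hh q) - hh q 0))"
  proof -
    have "hh q sums suminf (hh q)" by (rule summable_sums[OF hh_summable[OF q]])
    then have "(\<lambda>n. hh q (Suc n)) sums (suminf (hh q) - hh q 0)" by (simp add: sums_Suc_iff)
    then show ?thesis by (rule sums_mult)
  qed
  have "(\<lambda>n. (?S n + Rc q * hh q (Suc n)) - Rc q * hh q (Suc n)) sums (dd q 0 - 0 - Rc q * (suminf (hh q) - hh q 0))"
    by (rule sums_diff[OF t h])
  then have "?S sums (dd q 0 - Rc q * (suminf (hh q) - hh q 0))" by simp
  then have sS: "(\<Sum>n. ?S n) = dd q 0 - Rc q * (suminf (hh q) - hh q 0)" by (rule sums_unique[symmetric])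
  show ?thesis unfolding sS X0_id[OF q] RHS_id[OF q] sum_hh[OF q] by (simp add: algebra_simps)
qed

end
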